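(* Let $E$ be a real affine space of finite dimension, let $\mathcal{P}$ be a Yao-Yao partition of $E$ and let $c$ be its center. Let $\ell$ be an affine form on $E$ such that $\ell(c)=0$. Then there exists $A\in\mathcal{P}$ such that $\ell(x)\geq 0$ for all $x\in A$. Moreover, there is at most one element $A$ of $\mathcal{P}$ such that $\ell(x)>0$ for all $x\in A\setminus\{c\}$.
   Context: For a finite-dimensional real affine space $E$, $\vec{E}$ denotes its associated vector space. A set $\mathcal{P}$ of subsets of $E$ is a partition of $E$ if $\bigcup\mathcal{P}=E$ and the interiors of two distinct elements of $\mathcal{P}$ do not intersect (e.g. $\{(-\infty,a],[a,+\infty)\}$ is a partition of $\mathbb{R}$). Yao-Yao partitions and their centers are defined by induction on the dimension: if $E=\{c\}$ has dimension $0$, then $\mathcal{P}=\{\{c\}\}$ is a Yao-Yao partition of $E$ with center $c$. If $E$ has dimension $n\geq 1$, a set $\mathcal{P}$ is a Yao-Yao partition of $E$ if there exist an affine hyperplane $F$ of $E$, a vector $v\in\vec{E}\setminus\vec{F}$, and two Yao-Yao partitions $\mathcal{P}_+$ and $\mathcal{P}_-$ of $F$ having the same center $c$, such that $\mathcal{P}=\{A+\mathbb{R}_- v : A\in\mathcal{P}_-\}\cup\{A+\mathbb{R}_+ v : A\in\mathcal{P}_+\}$; the center of $\mathcal{P}$ is then $c$. *)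

theory Defs
  imports "HOL-Analysis.Analysis"
begin

text \<open>A finite-dimensional real affine space is modelled as a nonempty affine subset
  E of a Euclidean space 'a. Its direction (associated vector space) is the set of differences.\<close>

definition direction_of :: "'a::euclidean_space set \<Rightarrow> 'a set" where
  "direction_of E = {x - y | x y. x \<in> E \<and> y \<in> E}"

definition half_neg :: "'a::euclidean_space set \<Rightarrow> 'a \<Rightarrow> 'a set" where
  "half_neg A v = {a + t *\<^sub>R v | a t. a \<in> A \<and> t \<le> 0}"

definition half_pos :: "'a::euclidean_space set \<Rightarrow> 'a \<Rightarrow> 'a set" where
  "half_pos A v = {a + t *\<^sub>R v | a t. a \<in> A \<and> t \<ge> 0}"

inductive yao_yao :: "'a::euclidean_space set \<Rightarrow> 'a set set \<Rightarrow> 'a \<Rightarrow> bool" where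
  base: "yao_yao {c} {{c}} c"
| step: "\<lbrakk> affine E; aff_dim E \<ge> 1;
           affine F; F \<subseteq> E; aff_dim F = aff_dim E - 1;
           v \<in> direction_of E; v \<notin> direction_of F;
           yao_yao F Pm c; yao_yao F Pp c \<rbrakk>
         \<Longrightarrow> yao_yao E ((\<lambda>A. half_neg A v) ` Pm \<union> (\<lambda>A. half_pos A v) ` Pp) c"

definition affine_form_on :: "'a::euclidean_space set \<Rightarrow> ('a \<Rightarrow> real) \<Rightarrow> bool" where
  "affine_form_on E l \<longleftrightarrow>
     (\<forall>x\<in>E. \<forall>y\<in>E. \<forall>t::real. l ((1 - t) *\<^sub>R x + t *\<^sub>R y) = (1 - t) * l x + t * l y)"

end

theory Submission
  imports Defs
begin

lemma aff_add:
  assumes "affine E" "a \<in> E" "v \<in> direction_of E"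
  shows "a + v \<in> E"
proof -
  obtain x y where v: "v = x - y" "x \<in> E" "y \<in> E" using assms(3) unfolding direction_of_def by blast
  define p where "p = (1 - (1/2::real)) *\<^sub>R a + (1/2) *\<^sub>R x"
  have p: "p \<in> E" using assms(1,2) v(2) unfolding p_def affine_alt by blast
  have "(1 - (2::real)) *\<^sub>R y + 2 *\<^sub>R p \<in> E" using assms(1) p v(3) unfolding affine_alt by blast
  moreover have "(1 - (2::real)) *\<^sub>R y + 2 *\<^sub>R p = a + v"
    unfolding p_def v by (simp add: algebra_simps)
  ultimately show ?thesis by simp
qed

lemma lin_lemma:
  assumes "affine_form_on E l" "a \<in> E" "a + v \<in> E"
  shows "l (a + t *\<^sub>R v) = l a + t * (l (a + v) - l a)"
proof -
  have "l ((1 - t) *\<^sub>R a + t *\<^sub>R (a + v)) = (1 - t) * l a + t * l (a + v)"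
    using assms unfolding affine_form_on_def by blast
  moreover have "(1 - t) *\<^sub>R a + t *\<^sub>R (a + v) = a + t *\<^sub>R v" by (simp add: algebra_simps)
  ultimately show ?thesis by (simp add: algebra_simps)
qed

lemma shift_lemma:
  assumes "affine_form_on E l" "a \<in> E" "a + v \<in> E" "c \<in> E" "c + v \<in> E"
  shows "l (a + v) - l a = l (c + v) - l c"
proof -
  have 1: "l ((1 - 1/2) *\<^sub>R (a + v) + (1/2) *\<^sub>R c) = (1 - 1/2) * l (a + v) + (1/2) * l c"
    using assms unfolding affine_form_on_def by blast
  have 2: "l ((1 - 1/2) *\<^sub>R a + (1/2) *\<^sub>R (c + v)) = (1 - 1/2) * l a + (1/2) * l (c + v)"
    using assms unfolding affine_form_on_def by blast
  have "(1 - 1/2::real) *\<^sub>R (a + v) + (1/2) *\<^sub>R c = (1 - 1/2::real) *\<^sub>R a + (1/2) *\<^sub>R (c + v)"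
    by (simp add: algebra_simps)
  with 1 2 show ?thesis by simp
qed

lemma yy_basic:
  assumes "yao_yao E P c"
  shows "c \<in> E \<and> (\<forall>A\<in>P. c \<in> A \<and> A \<subseteq> E)"
  using assms
proof (induction rule: yao_yao.induct)
  case (base c)
  then show ?case by simp
next
  case (step E F v Pm c Pp)
  have cE: "c \<in> E" using step by blast
  have hn: "half_neg A v \<subseteq> E" if "A \<subseteq> F" for A
  proof
    fix x assume "x \<in> half_neg A v"
    then obtain a t where x: "x = a + t *\<^sub>R v" "a \<in> A" by (auto simp: half_neg_def)
    have aE: "a \<in> E" using x(2) that step(4) by blast
    have "(t *\<^sub>R v) \<in> direction_of E"
    proof -
      obtain p q where "v = p - q" "p \<in> E" "q \<in> E" using step(6) unfolding direction_of_def by blast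
      then have "(1 - t) *\<^sub>R q + t *\<^sub>R p \<in> E" using step(1) unfolding affine_alt by blast
      moreover have "(1 - t) *\<^sub>R q + t *\<^sub>R p = q + t *\<^sub>R v" unfolding \<open>v = p - q\<close> by (simp add: algebra_simps)
      ultimately have "q + t *\<^sub>R v \<in> E" by simp
      then have "t *\<^sub>R v = (q + t *\<^sub>R v) - q" by simp
      then show ?thesis unfolding direction_of_def using \<open>q \<in> E\<close> \<open>q + t *\<^sub>R v \<in> E\<close> by blast
    qed
    then show "x \<in> E" using aff_add[OF step(1) aE] x(1) by simp
  qed
  have hp: "half_pos A v \<subseteq> E" if "A \<subseteq> F" for A
  proof
    fix x assume "x \<in> half_pos A v"
    then obtain a t where x: "x = a + t *\<^sub>R v" "a \<in> A" by (auto simp: half_pos_def)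
    have aE: "a \<in> E" using x(2) that step(4) by blast
    have "(t *\<^sub>R v) \<in> direction_of E"
    proof -
      obtain p q where "v = p - q" "p \<in> E" "q \<in> E" using step(6) unfolding direction_of_def by blast
      then have "(1 - t) *\<^sub>R q + t *\<^sub>R p \<in> E" using step(1) unfolding affine_alt by blast
      moreover have "(1 - t) *\<^sub>R q + t *\<^sub>R p = q + t *\<^sub>R v" unfolding \<open>v = p - q\<close> by (simp add: algebra_simps)
      ultimately have "q + t *\<^sub>R v \<in> E" by simp
      then have "t *\<^sub>R v = (q + t *\<^sub>R v) - q" by simp
      then show ?thesis unfolding direction_of_def using \<open>q \<in> E\<close> \<open>q + t *\<^sub>R v \<in> E\<close> by blast
    qed
    then show "x \<in> E" using aff_add[OF step(1) aE] x(1) by simp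
  qed
  have cn: "c \<in> half_neg A v" if "c \<in> A" for A
    unfolding half_neg_def using that by (intro CollectI exI[of _ c] exI[of _ "0::real"]) simp
  have cp: "c \<in> half_pos A v" if "c \<in> A" for A
    unfolding half_pos_def using that by (intro CollectI exI[of _ c] exI[of _ "0::real"]) simp
  have 1: "\<forall>A\<in>Pm. c \<in> half_neg A v \<and> half_neg A v \<subseteq> E"
  proof
    fix A assume "A \<in> Pm"
    then have "c \<in> A" "A \<subseteq> F" using step.IH(1) by auto
    then show "c \<in> half_neg A v \<and> half_neg A v \<subseteq> E" using hn cn by simp
  qed
  have 2: "\<forall>A\<in>Pp. c \<in> half_pos A v \<and> half_pos A v \<subseteq> E"
  proof
    fix A assume "A \<in> Pp"
    then have "c \<in> A" "A \<subseteq> F" using step.IH(2) by auto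
    then show "c \<in> half_pos A v \<and> half_pos A v \<subseteq> E" using hp cp by simp
  qed
  show ?case using cE 1 2 by (simp add: ball_Un)
qed


lemma main_lemma:
  assumes "yao_yao E P c" "affine_form_on E l" "l c = 0"
  shows "(\<exists>A\<in>P. \<forall>x\<in>A. l x \<ge> 0)
       \<and> (\<forall>A\<in>P. \<forall>B\<in>P. (\<forall>x\<in>A - {c}. l x > 0) \<and> (\<forall>x\<in>B - {c}. l x > 0) \<longrightarrow> A = B)"
  using assms
proof (induction rule: yao_yao.induct)
  case (base c)
  then show ?case by simp
next
  case (step E F v Pm c Pp)
  have lF: "affine_form_on F l" using step.prems(1) step.hyps(4) unfolding affine_form_on_def by blast
  note IHm = step.IH(1)[OF lF step.prems(2)]
  note IHp = step.IH(2)[OF lF step.prems(2)]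
  have bm: "c \<in> F \<and> (\<forall>A\<in>Pm. c \<in> A \<and> A \<subseteq> F)" using yy_basic[OF step.hyps(8)] .
  have bp: "\<forall>A\<in>Pp. c \<in> A \<and> A \<subseteq> F" using yy_basic[OF step.hyps(9)] by blast
  have cE: "c \<in> E" using bm step.hyps(4) by blast
  define w where "w = l (c + v) - l c"
  have key: "l (a + t *\<^sub>R v) = l a + t * w" if "a \<in> E" for a t
  proof -
    have av: "a + v \<in> E" using aff_add[OF step.hyps(1) that step.hyps(6)] .
    have cv: "c + v \<in> E" using aff_add[OF step.hyps(1) cE step.hyps(6)] .
    show ?thesis using lin_lemma[OF step.prems(1) that av, of t]
      shift_lemma[OF step.prems(1) that av cE cv] unfolding w_def by simp
  qed
  have v0: "v \<noteq> 0"
  proof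
    assume "v = 0"
    then have "v = c - c" by simp
    then have "v \<in> direction_of F" using bm unfolding direction_of_def by blast
    with step.hyps(7) show False by blast
  qed
  have P1: "\<exists>A\<in>(\<lambda>A. half_neg A v) ` Pm \<union> (\<lambda>A. half_pos A v) ` Pp. \<forall>x\<in>A. l x \<ge> 0"
  proof (cases "w \<ge> 0")
    case True
    obtain A where A: "A \<in> Pp" "\<forall>x\<in>A. l x \<ge> 0" using IHp by blast
    have "\<forall>x\<in>half_pos A v. l x \<ge> 0"
    proof
      fix x assume "x \<in> half_pos A v"
      then obtain a t where x: "x = a + t *\<^sub>R v" "a \<in> A" "t \<ge> 0" by (auto simp: half_pos_def)
      have "a \<in> E" using x(2) A(1) bp step.hyps(4) by blast
      then have "l x = l a + t * w" using key x(1) by simp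
      then show "l x \<ge> 0" using A(2) x True by simp
    qed
    then show ?thesis using A(1) by blast
  next
    case False
    obtain A where A: "A \<in> Pm" "\<forall>x\<in>A. l x \<ge> 0" using IHm by blast
    have "\<forall>x\<in>half_neg A v. l x \<ge> 0"
    proof
      fix x assume "x \<in> half_neg A v"
      then obtain a t where x: "x = a + t *\<^sub>R v" "a \<in> A" "t \<le> 0" by (auto simp: half_neg_def)
      have "a \<in> E" using x(2) A(1) bm step.hyps(4) by blast
      then have "l x = l a + t * w" using key x(1) by simp
      moreover have "t * w \<ge> 0" using x(3) False by (simp add: mult_nonpos_nonpos)
      ultimately show "l x \<ge> 0" using A(2) x by simp
    qed
    then show ?thesis using A(1) by blast
  qed
  have negw: "w < 0" if "A \<in> Pm" "\<forall>x\<in>half_neg A v - {c}. l x > 0" for A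
  proof -
    have cA: "c \<in> A" using that(1) bm by blast
    have "c + (-1) *\<^sub>R v \<in> half_neg A v" unfolding half_neg_def
      using cA by (intro CollectI exI[of _ c] exI[of _ "-1::real"]) simp
    moreover have "c + (-1) *\<^sub>R v \<noteq> c" using v0 by simp
    ultimately have "l (c + (-1) *\<^sub>R v) > 0" using that(2) by blast
    then show ?thesis using key[OF cE, of "-1"] step.prems(2) by simp
  qed
  have posw: "w > 0" if "A \<in> Pp" "\<forall>x\<in>half_pos A v - {c}. l x > 0" for A
  proof -
    have cA: "c \<in> A" using that(1) bp by blast
    have "c + 1 *\<^sub>R v \<in> half_pos A v" unfolding half_pos_def
      using cA by (intro CollectI exI[of _ c] exI[of _ "1::real"]) simp
    moreover have "c + 1 *\<^sub>R v \<noteq> c" using v0 by simp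
    ultimately have "l (c + 1 *\<^sub>R v) > 0" using that(2) by blast
    then show ?thesis using key[OF cE, of "1"] step.prems(2) by simp
  qed
  have subn: "A \<subseteq> half_neg A v" for A
  proof
    fix x assume "x \<in> A" then show "x \<in> half_neg A v" unfolding half_neg_def by (intro CollectI exI[of _ x] exI[of _ "0::real"]) simp
  qed
  have subp: "A \<subseteq> half_pos A v" for A
  proof
    fix x assume "x \<in> A" then show "x \<in> half_pos A v" unfolding half_pos_def by (intro CollectI exI[of _ x] exI[of _ "0::real"]) simp
  qed
  have P2: "A' = B'" if "A' \<in> (\<lambda>A. half_neg A v) ` Pm \<union> (\<lambda>A. half_pos A v) ` Pp"
    "B' \<in> (\<lambda>A. half_neg A v) ` Pm \<union> (\<lambda>A. half_pos A v) ` Pp"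
    "\<forall>x\<in>A' - {c}. l x > 0" "\<forall>x\<in>B' - {c}. l x > 0" for A' B'
  proof -
    note H = that
    consider (nn) A B where "A \<in> Pm" "B \<in> Pm" "A' = half_neg A v" "B' = half_neg B v"
      | (np) A B where "A \<in> Pm" "B \<in> Pp" "A' = half_neg A v" "B' = half_pos B v"
      | (pn) A B where "A \<in> Pp" "B \<in> Pm" "A' = half_pos A v" "B' = half_neg B v"
      | (pp) A B where "A \<in> Pp" "B \<in> Pp" "A' = half_pos A v" "B' = half_pos B v"
      using H(1,2) by blast
    then show ?thesis
    proof cases
      case nn
      have "\<forall>x\<in>A - {c}. l x > 0" using H(3) subn[of A] nn by blast
      moreover have "\<forall>x\<in>B - {c}. l x > 0" using H(4) subn[of B] nn by blast
      ultimately have "A = B" using IHm nn by blast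
      then show ?thesis using nn by simp
    next
      case np
      have "w < 0" using negw[OF np(1)] H(3) np(3) by simp
      moreover have "w > 0" using posw[OF np(2)] H(4) np(4) by simp
      ultimately show ?thesis by simp
    next
      case pn
      have "w < 0" using negw[OF pn(2)] H(4) pn(4) by simp
      moreover have "w > 0" using posw[OF pn(1)] H(3) pn(3) by simp
      ultimately show ?thesis by simp
    next
      case pp
      have "\<forall>x\<in>A - {c}. l x > 0" using H(3) subp[of A] pp by blast
      moreover have "\<forall>x\<in>B - {c}. l x > 0" using H(4) subp[of B] pp by blast
      ultimately have "A = B" using IHp pp by blast
      then show ?thesis using pp by simp
    qed
  qed
  show ?case
    apply (rule conjI[OF P1])
    apply (intro ballI impI)
    apply (erule conjE)
    apply (erule (3) P2)
    done
qed

theorem mainTheorem1: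
  fixes E :: "'a::euclidean_space set" and P :: "'a set set" and c :: 'a
    and l :: "'a \<Rightarrow> real"
  assumes "affine E"
    and "yao_yao E P c"
    and "affine_form_on E l"
    and "l c = 0"
  shows "(\<exists>A\<in>P. \<forall>x\<in>A. l x \<ge> 0)
       \<and> (\<forall>A\<in>P. \<forall>B\<in>P. (\<forall>x\<in>A - {c}. l x > 0) \<and> (\<forall>x\<in>B - {c}. l x > 0) \<longrightarrow> A = B)"
  using main_lemma[OF assms(2,3,4)] .

end
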